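(* Let $D$ be a nonempty domain, let $\mathcal I_1$ be a set of unary predicates on $D$ and $\mathcal I_2$ a set of binary predicates on $D$. Let $\bar L\ge 0$ and $\bar H\ge 1$ be integers. Then every predicate in $\mathcal{FOET}_{\{\bar L,\bar H\}}(\mathcal I_1,\mathcal I_2)$ is computed by some join-chain computation with $\bar L$ layers and at most $\bar H$ heads per layer, with input $\mathcal I_1$ and binary predicates from $\mathcal I_2$.
   Context: All predicates are interpreted on $D$; an empty conjunction is the constant-true predicate. $\mathcal{FOET}(\mathcal I_1,\mathcal I_2)$: the set of unary predicates $P(y_0)$ (free variable $y_0$) that are logically equivalent to a formula $$P(y_0)=\exists y_1\cdots\exists y_T\ \bigvee_{m=1}^{M}\Big[\Big(\bigwedge_{t\in\mathcal N^m}P^m_t(y_t)\Big)\wedge\Big(\bigwedge_{(t_p,t_c)\in\mathcal E^m}W^m_{(t_p,t_c)}(y_{t_p},y_{t_c})\Big)\wedge Q^m\Big]$$ in which: each $\mathcal N^m\subseteq\{0,\dots,T\}$ contains $0$; each $\mathcal E^m$ is a set of pairs $(t_p,t_c)$ of elements of $\mathcal N^m$ such that the graph $\mathcal G^m=(\mathcal N^m,\mathcal E^m)$ is a tree, regarded as rooted at $0$ with $t_p$ the parent of $t_c$ for each edge; each $W^m_{(t_p,t_c)}\in\mathcal I_2$; each $P^m_t$ is a finite conjunction of predicates from $\mathcal I_1$; and each $Q^m$ is a propositional constant (true or false). Height and width: for the tree $\mathcal G^m$ let $L^m$ be its height (the maximum number of edges on a path from the root $0$ to a vertex) and $H^m$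 its number of leaf nodes. The height of the predicate is $L=\max_m L^m$ and its width is $H=\sum_m H^m$. $\mathcal{FOET}_{\{\bar L,\bar H\}}(\mathcal I_1,\mathcal I_2)$ is the set of predicates in $\mathcal{FOET}(\mathcal I_1,\mathcal I_2)$ admitting such a representation with $L\le\bar L$ and $H\le\bar H$. Join operation: for a binary predicate $W$ and unary predicate $R$, the join is the unary predicate $x\mapsto\exists y\in D\,(W(x,y)\wedge R(y))$. Join-chain computation with $\bar L$ layers and at most $\bar H$ heads per layer (symbolic model of the network consisting of stacked multi-head self-attention blocks, each head's attention matrix representing a binary predicate and its value tensor a unary predicate, with a skip connection and an aggregation/feed-forward step after each block): let $\mathcal C_0$ be the set of all finite conjunctions of predicates in $\mathcal I_1$. For $l=1,\dots,\bar L$, layer $l$ consists of at most $\bar H$ heads; head $k$ selects some $W\in\mathcal I_2$ and some $R\in\mathcal C_{l-1}$ and outputs the join $J_{l,k}(x)=\exists y\,(W(x,y)\wedge R(y))$; then (skip connection plus aggregation) $\mathcal C_l$ is the set of all finite conjunctions of predicates from $\mathcal C_{l-1}\cup\{J_{l,k}\}_k$. The output of the computation is a predicate of the form $x\mapsto\bigvee_{m=1}^{M}(R_m(x)\wedge q_m)$ with $R_m\in\mathcal C_{\bar L}$ and $q_m$ propositional constants. A unary predicate is computed by such a computation if it equals (on $D$) the output for some choice of heads and final disjunction. (Standing assumption of the paper: every $W\in\mathcal I_2$ is a function of some subset of the inputs $\mathcal I_1$, so that the heads may realize any $W\in\mathcal I_2$; this is built into the model above by allowing heads to select any $W\in\mathcal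 I_2$.) *)

theory Defs
  imports Main
begin

definition rooted_tree :: "nat set \<Rightarrow> (nat \<times> nat) set \<Rightarrow> bool" where
  "rooted_tree N E \<longleftrightarrow>
     finite N \<and> 0 \<in> N \<and> E \<subseteq> N \<times> N \<and>
     (\<forall>(p, c) \<in> E. c \<noteq> 0) \<and>
     (\<forall>c \<in> N - {0}. \<exists>!p. (p, c) \<in> E) \<and>
     (\<forall>v \<in> N. (0, v) \<in> E\<^sup>*)"

definition tree_height :: "(nat \<times> nat) set \<Rightarrow> nat" where
  "tree_height E = Max {k. \<exists>v. (0, v) \<in> E ^^ k}"

definition tree_leaves :: "nat set \<Rightarrow> (nat \<times> nat) set \<Rightarrow> nat set" where
  "tree_leaves N E = {v \<in> N. \<forall>c. (v, c) \<notin> E}"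

text \<open>Finite conjunctions of predicates are represented by lists; the empty list
  is the constant-true predicate. Equality of predicates is on D.\<close>

definition FOET_LH ::
  "'a set \<Rightarrow> ('a \<Rightarrow> bool) set \<Rightarrow> ('a \<Rightarrow> 'a \<Rightarrow> bool) set \<Rightarrow> nat \<Rightarrow> nat \<Rightarrow> ('a \<Rightarrow> bool) \<Rightarrow> bool" where
  "FOET_LH D I1 I2 Lb Hb P \<longleftrightarrow>
    (\<exists>(T::nat) (M::nat) (Nn :: nat \<Rightarrow> nat set) (E :: nat \<Rightarrow> (nat \<times> nat) set)
       (Ps :: nat \<Rightarrow> nat \<Rightarrow> ('a \<Rightarrow> bool) list) (W :: nat \<Rightarrow> nat \<times> nat \<Rightarrow> 'a \<Rightarrow> 'a \<Rightarrow> bool)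
       (Q :: nat \<Rightarrow> bool).
      (\<forall>m < M. rooted_tree (Nn m) (E m) \<and> Nn m \<subseteq> {0..T}
               \<and> (\<forall>e \<in> E m. W m e \<in> I2)
               \<and> (\<forall>t \<in> Nn m. set (Ps m t) \<subseteq> I1)
               \<and> tree_height (E m) \<le> Lb)
      \<and> (\<Sum>m<M. card (tree_leaves (Nn m) (E m))) \<le> Hb
      \<and> (\<forall>x \<in> D. P x \<longleftrightarrow>
           (\<exists>y :: nat \<Rightarrow> 'a. y 0 = x \<and> (\<forall>t \<in> {1..T}. y t \<in> D) \<and>
              (\<exists>m < M. (\<forall>t \<in> Nn m. \<forall>R \<in> set (Ps m t). R (y t))
                      \<and> (\<forall>(p, c) \<in> E m. W m (p, c) (y p) (y c))
                      \<and> Q m))))"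

definition join :: "'a set \<Rightarrow> ('a \<Rightarrow> 'a \<Rightarrow> bool) \<Rightarrow> ('a \<Rightarrow> bool) \<Rightarrow> 'a \<Rightarrow> bool" where
  "join D W R = (\<lambda>x. \<exists>y \<in> D. W x y \<and> R y)"

definition conj_closure :: "('a \<Rightarrow> bool) set \<Rightarrow> ('a \<Rightarrow> bool) set" where
  "conj_closure S = {(\<lambda>x. \<forall>R \<in> set rs. R x) | rs. set rs \<subseteq> S}"

text \<open>heads l = list of (W, R) selected by the heads of layer l (l \<ge> 1).\<close>
fun layer_preds ::
  "'a set \<Rightarrow> ('a \<Rightarrow> bool) set \<Rightarrow> (nat \<Rightarrow> (('a \<Rightarrow> 'a \<Rightarrow> bool) \<times> ('a \<Rightarrow> bool)) list) \<Rightarrow> nat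
   \<Rightarrow> ('a \<Rightarrow> bool) set" where
  "layer_preds D I1 heads 0 = conj_closure I1"
| "layer_preds D I1 heads (Suc l) =
     conj_closure (layer_preds D I1 heads l \<union> (\<lambda>(W, R). join D W R) ` set (heads (Suc l)))"

definition join_chain_computes ::
  "'a set \<Rightarrow> ('a \<Rightarrow> bool) set \<Rightarrow> ('a \<Rightarrow> 'a \<Rightarrow> bool) set \<Rightarrow> nat \<Rightarrow> nat \<Rightarrow> ('a \<Rightarrow> bool) \<Rightarrow> bool" where
  "join_chain_computes D I1 I2 Lb Hb P \<longleftrightarrow>
    (\<exists>heads outs.
       (\<forall>l \<in> {1..Lb}. length (heads l) \<le> Hb \<and>
          (\<forall>(W, R) \<in> set (heads l). W \<in> I2 \<and> R \<in> layer_preds D I1 heads (l - 1)))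
     \<and> (\<forall>(R, q) \<in> set outs. R \<in> layer_preds D I1 heads Lb)
     \<and> (\<forall>x \<in> D. P x \<longleftrightarrow> (\<exists>(R, q) \<in> set outs. R x \<and> q)))"

end

theory Submission
  imports Defs "HOL-Library.Product_Lexorder"
begin


definition desc :: "(nat \<times> nat) set \<Rightarrow> nat \<Rightarrow> nat set" where
  "desc E v = {t. (v,t) \<in> E\<^sup>*}"
definition hgt :: "(nat \<times> nat) set \<Rightarrow> nat \<Rightarrow> nat" where
  "hgt E c = Max {k. \<exists>v. (c,v) \<in> E ^^ k}"
definition depth :: "(nat \<times> nat) set \<Rightarrow> nat \<Rightarrow> nat" where
  "depth E v = (THE k. (0,v) \<in> E ^^ k)"
definition sat :: "(nat \<times> nat) set \<Rightarrow> 'a set \<Rightarrow> (nat \<Rightarrow> ('a \<Rightarrow> bool) list)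
   \<Rightarrow> (nat \<times> nat \<Rightarrow> 'a \<Rightarrow> 'a \<Rightarrow> bool) \<Rightarrow> nat \<Rightarrow> 'a \<Rightarrow> bool" where
  "sat E D Ps W v x = (\<exists>y. y v = x \<and> (\<forall>t\<in>desc E v - {v}. y t \<in> D)
      \<and> (\<forall>t\<in>desc E v. \<forall>R\<in>set (Ps t). R (y t))
      \<and> (\<forall>(p,c)\<in>E. p \<in> desc E v \<longrightarrow> W (p,c) (y p) (y c)))"

locale rtree =
  fixes N :: "nat set" and E :: "(nat \<times> nat) set"
  assumes rt: "rooted_tree N E"
begin

lemma finN: "finite N" and root: "0 \<in> N" and EN: "E \<subseteq> N \<times> N"
  and no0: "(p,c) \<in> E \<Longrightarrow> c \<noteq> 0"
  and upar: "c \<in> N - {0} \<Longrightarrow> \<exists>!p. (p,c) \<in> E"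
  and reach: "v \<in> N \<Longrightarrow> (0,v) \<in> E\<^sup>*"
  using rt unfolding rooted_tree_def by auto

lemma par_eq: "(p,c) \<in> E \<Longrightarrow> (p',c) \<in> E \<Longrightarrow> p = p'"
proof -
  assume a: "(p,c) \<in> E" "(p',c) \<in> E"
  then have "c \<in> N - {0}" using EN no0 by auto
  then show ?thesis using upar a by blast
qed

lemma reach_N: "(a,v) \<in> E\<^sup>* \<Longrightarrow> a \<in> N \<Longrightarrow> v \<in> N"
  by (induct rule: rtrancl_induct) (use EN in auto)

lemma depth_unique: "(0,v) \<in> E ^^ k \<Longrightarrow> (0,v) \<in> E ^^ j \<Longrightarrow> k = j"
proof (induction k arbitrary: v j)
  case 0
  then have v: "v = 0" by simp
  show ?case
  proof (cases j)
    case (Suc j')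
    with 0 v obtain u where "(u,0) \<in> E" by (auto elim: relpow_Suc_E)
    then show ?thesis using no0 by blast
  qed simp
next
  case (Suc k)
  then obtain u where u: "(0,u) \<in> E ^^ k" "(u,v) \<in> E" by (auto elim: relpow_Suc_E)
  then have "v \<noteq> 0" using no0 by blast
  show ?case
  proof (cases j)
    case 0 then show ?thesis using Suc.prems \<open>v \<noteq> 0\<close> by simp
  next
    case (Suc j')
    with Suc.prems obtain u' where u': "(0,u') \<in> E ^^ j'" "(u',v) \<in> E" by (auto elim: relpow_Suc_E)
    have "u = u'" using par_eq u u' by blast
    then show ?thesis using Suc.IH u u' Suc by blast
  qed
qed

lemma depth: "(0,v) \<in> E ^^ k \<Longrightarrow> depth E v = k"
  unfolding depth_def using depth_unique by blast

lemma depth_path: "a \<in> N \<Longrightarrow> (a,b) \<in> E ^^ j \<Longrightarrow> depth E b = depth E a + j"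
proof -
  assume a: "a \<in> N" "(a,b) \<in> E ^^ j"
  obtain d where d: "(0,a) \<in> E ^^ d" using reach[OF a(1)] rtrancl_power by blast
  have "(0,b) \<in> E ^^ (d + j)" using d a(2) relpow_add by blast
  then show ?thesis using depth d by auto
qed

lemma hfin: "c \<in> N \<Longrightarrow> finite {k. \<exists>v. (c,v) \<in> E ^^ k}"
proof -
  assume c: "c \<in> N"
  have "{k. \<exists>v. (c,v) \<in> E ^^ k} \<subseteq> {..Max (depth E ` N)}"
  proof
    fix k assume "k \<in> {k. \<exists>v. (c,v) \<in> E ^^ k}"
    then obtain v where v: "(c,v) \<in> E ^^ k" by blast
    have vN: "v \<in> N" using reach_N[OF relpow_imp_rtrancl[OF v] c] .
    have "k \<le> depth E v" using depth_path[OF c v] by simp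
    also have "\<dots> \<le> Max (depth E ` N)" using vN finN by simp
    finally show "k \<in> {..Max (depth E ` N)}" by simp
  qed
  then show ?thesis using finite_subset by blast
qed

lemma hge: "c \<in> N \<Longrightarrow> (c,v) \<in> E ^^ k \<Longrightarrow> k \<le> hgt E c"
  unfolding hgt_def using hfin by (intro Max_ge) auto

lemma hex: "c \<in> N \<Longrightarrow> \<exists>v. (c,v) \<in> E ^^ hgt E c"
proof -
  assume c: "c \<in> N"
  have "(c,c) \<in> E ^^ 0" by simp
  then have ne: "{k. \<exists>v. (c,v) \<in> E ^^ k} \<noteq> {}" by blast
  have "hgt E c \<in> {k. \<exists>v. (c,v) \<in> E ^^ k}" unfolding hgt_def
    by (rule Max_in[OF hfin[OF c] ne])
  then show ?thesis by blast
qed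

lemma h_path: "c \<in> N \<Longrightarrow> (c,d) \<in> E ^^ j \<Longrightarrow> j + hgt E d \<le> hgt E c"
proof -
  assume a: "c \<in> N" "(c,d) \<in> E ^^ j"
  have dN: "d \<in> N" using reach_N[OF relpow_imp_rtrancl[OF a(2)] a(1)] .
  obtain v where v: "(d,v) \<in> E ^^ hgt E d" using hex[OF dN] by blast
  have "(c,v) \<in> E ^^ (j + hgt E d)" using a(2) v relpow_add by blast
  then show ?thesis using hge a(1) by blast
qed

lemma h_edge: "(p,c) \<in> E \<Longrightarrow> Suc (hgt E c) \<le> hgt E p"
  using h_path[of p c 1] EN by auto

lemma leaf_ex: "c \<in> N \<Longrightarrow> \<exists>v. (c,v) \<in> E ^^ hgt E c \<and> v \<in> tree_leaves N E"
proof -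
  assume c: "c \<in> N"
  obtain v where v: "(c,v) \<in> E ^^ hgt E c" using hex[OF c] by blast
  have vN: "v \<in> N" using reach_N[OF relpow_imp_rtrancl[OF v] c] .
  have "\<forall>w. (v,w) \<notin> E"
  proof (intro allI notI)
    fix w assume vw: "(v,w) \<in> E"
    have "(c,w) \<in> E ^^ Suc (hgt E c)" using relpow_Suc_I[OF v vw] .
    from hge[OF c this] show False by simp
  qed
  then show ?thesis using v vN unfolding tree_leaves_def by blast
qed

lemma comparable: "(a,t) \<in> E\<^sup>* \<Longrightarrow> (b,t) \<in> E\<^sup>* \<longrightarrow> (a,b) \<in> E\<^sup>* \<or> (b,a) \<in> E\<^sup>*"
proof (induction rule: rtrancl_induct)
  case base then show ?case by blast
next
  case (step u t)
  show ?case
  proof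
    assume bt: "(b,t) \<in> E\<^sup>*"
    show "(a,b) \<in> E\<^sup>* \<or> (b,a) \<in> E\<^sup>*"
    proof (cases "b = t")
      case True then show ?thesis using step by auto
    next
      case False
      from bt obtain w where "(b,w) \<in> E\<^sup>*" "(w,t) \<in> E"
      proof (cases rule: rtranclE)
        case base then show ?thesis using False by simp
      qed blast
      then show ?thesis using par_eq step by blast
    qed
  qed
qed

lemma card_layer: "card {(p,c). (p,c) \<in> E \<and> Suc (hgt E c) = l} \<le> card (tree_leaves N E)"
proof -
  define A where "A = {(p,c). (p,c) \<in> E \<and> Suc (hgt E c) = l}"
  define f where "f = (\<lambda>(p::nat,c). SOME v. (c,v) \<in> E ^^ hgt E c \<and> v \<in> tree_leaves N E)"
  have fp: "(c, f (p,c)) \<in> E ^^ hgt E c \<and> f (p,c) \<in> tree_leaves N E" if "(p,c) \<in> E" for p c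
  proof -
    have "c \<in> N" using that EN by auto
    from someI_ex[OF leaf_ex[OF this]] show ?thesis unfolding f_def by simp
  qed
  have "inj_on f A"
  proof (rule inj_onI)
    fix e1 e2 assume e: "e1 \<in> A" "e2 \<in> A" "f e1 = f e2"
    obtain p1 c1 p2 c2 where ee: "e1 = (p1,c1)" "e2 = (p2,c2)" by fastforce
    have E1: "(p1,c1) \<in> E" "(p2,c2) \<in> E" and hh: "hgt E c1 = hgt E c2"
      using e ee unfolding A_def by auto
    have N1: "c1 \<in> N" "c2 \<in> N" using E1 EN by auto
    have "(c1, f e1) \<in> E\<^sup>*"
      using relpow_imp_rtrancl[OF conjunct1[OF fp[OF E1(1)]]] ee(1) by simp
    moreover have "(c2, f e1) \<in> E\<^sup>*"
      using relpow_imp_rtrancl[OF conjunct1[OF fp[OF E1(2)]]] ee e(3) by simp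
    ultimately have "(c1,c2) \<in> E\<^sup>* \<or> (c2,c1) \<in> E\<^sup>*" using comparable by metis
    then have "c1 = c2"
    proof
      assume "(c1,c2) \<in> E\<^sup>*"
      then obtain j where jj: "(c1,c2) \<in> E ^^ j" using rtrancl_power by blast
      have "j = 0" using h_path[OF N1(1) jj] hh by simp
      then show ?thesis using jj by simp
    next
      assume "(c2,c1) \<in> E\<^sup>*"
      then obtain j where jj: "(c2,c1) \<in> E ^^ j" using rtrancl_power by blast
      have "j = 0" using h_path[OF N1(2) jj] hh by simp
      then show ?thesis using jj by simp
    qed
    then show "e1 = e2" using ee E1 par_eq by blast
  qed
  moreover have "f ` A \<subseteq> tree_leaves N E" using fp unfolding A_def by auto
  moreover have "finite (tree_leaves N E)" using finN unfolding tree_leaves_def by simp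
  ultimately show ?thesis unfolding A_def by (rule card_inj_on_le)
qed

end


context rtree begin

lemma edge_depth: "(p,c) \<in> E \<Longrightarrow> depth E c = Suc (depth E p)"
  using depth_path[of p c 1] EN by auto

lemma not_back: "(v,c) \<in> E \<Longrightarrow> (c,v) \<notin> E\<^sup>*"
proof
  assume a: "(v,c) \<in> E" "(c,v) \<in> E\<^sup>*"
  then obtain j where j: "(c,v) \<in> E ^^ j" using rtrancl_power by blast
  have "c \<in> N" using a EN by auto
  then have "depth E v = depth E c + j" using depth_path j by blast
  then show False using edge_depth[OF a(1)] by simp
qed

lemma edge_neq: "(v,c) \<in> E \<Longrightarrow> c \<noteq> v"
  using not_back by blast

lemma child_ex: "t \<in> desc E v \<Longrightarrow> t \<noteq> v \<Longrightarrow> \<exists>c. (v,c) \<in> E \<and> t \<in> desc E c"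
proof -
  assume a: "t \<in> desc E v" "t \<noteq> v"
  then have "(v,t) \<in> E\<^sup>*" unfolding desc_def by simp
  then show ?thesis
  proof (cases rule: converse_rtranclE)
    case base then show ?thesis using a by simp
  next
    case (step c) then show ?thesis unfolding desc_def by blast
  qed
qed

lemma child_unique:
  assumes "(v,c1) \<in> E" "(v,c2) \<in> E" "t \<in> desc E c1" "t \<in> desc E c2"
  shows "c1 = c2"
proof -
  have N: "c1 \<in> N" "c2 \<in> N" using assms EN by auto
  have "(c1,c2) \<in> E\<^sup>* \<or> (c2,c1) \<in> E\<^sup>*" using comparable assms(3,4) unfolding desc_def by blast
  then show ?thesis
  proof
    assume "(c1,c2) \<in> E\<^sup>*"
    then obtain j where j: "(c1,c2) \<in> E ^^ j" using rtrancl_power by blast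
    have "j = 0" using depth_path[OF N(1) j] edge_depth assms(1,2) by simp
    then show ?thesis using j by simp
  next
    assume "(c2,c1) \<in> E\<^sup>*"
    then obtain j where j: "(c2,c1) \<in> E ^^ j" using rtrancl_power by blast
    have "j = 0" using depth_path[OF N(2) j] edge_depth assms(1,2) by simp
    then show ?thesis using j by simp
  qed
qed

lemma sat_unfold:
  assumes vN: "v \<in> N"
  shows "sat E D Ps W v x \<longleftrightarrow> (\<forall>R\<in>set (Ps v). R x) \<and>
           (\<forall>c. (v,c) \<in> E \<longrightarrow> join D (W (v,c)) (sat E D Ps W c) x)"
proof
  assume "sat E D Ps W v x"
  then obtain y where y: "y v = x" "\<forall>t\<in>desc E v - {v}. y t \<in> D"
    "\<forall>t\<in>desc E v. \<forall>R\<in>set (Ps t). R (y t)"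
    "\<forall>(p,c)\<in>E. p \<in> desc E v \<longrightarrow> W (p,c) (y p) (y c)" unfolding sat_def by blast
  have vd: "v \<in> desc E v" unfolding desc_def by simp
  show "(\<forall>R\<in>set (Ps v). R x) \<and> (\<forall>c. (v,c) \<in> E \<longrightarrow> join D (W (v,c)) (sat E D Ps W c) x)"
  proof (intro conjI allI impI)
    show "\<forall>R\<in>set (Ps v). R x" using y vd by auto
    fix c assume c: "(v,c) \<in> E"
    have cd: "desc E c \<subseteq> desc E v" using c unfolding desc_def
      by (auto intro: converse_rtrancl_into_rtrancl)
    have vnc: "v \<notin> desc E c" using not_back c unfolding desc_def by blast
    have cc: "c \<in> desc E c" by (simp add: desc_def)
    have "y c \<in> D" using y(2) cd cc edge_neq[OF c] by blast
    moreover have "W (v,c) x (y c)" using y(4) c vd y(1) by auto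
    moreover have "sat E D Ps W c (y c)" unfolding sat_def
    proof (intro exI[of _ y] conjI)
      show "\<forall>t\<in>desc E c - {c}. y t \<in> D" using y(2) cd vnc by blast
      show "\<forall>t\<in>desc E c. \<forall>R\<in>set (Ps t). R (y t)" using y(3) cd by blast
      show "\<forall>(p,q)\<in>E. p \<in> desc E c \<longrightarrow> W (p,q) (y p) (y q)" using y(4) cd by blast
    qed simp
    ultimately show "join D (W (v,c)) (sat E D Ps W c) x" unfolding join_def by blast
  qed
next
  assume a: "(\<forall>R\<in>set (Ps v). R x) \<and> (\<forall>c. (v,c) \<in> E \<longrightarrow> join D (W (v,c)) (sat E D Ps W c) x)"
  define good where "good c y \<longleftrightarrow> (y c \<in> D \<and> W (v,c) x (y c) \<and> (\<forall>t\<in>desc E c - {c}. y t \<in> D)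
      \<and> (\<forall>t\<in>desc E c. \<forall>R\<in>set (Ps t). R (y t))
      \<and> (\<forall>(p,q)\<in>E. p \<in> desc E c \<longrightarrow> W (p,q) (y p) (y q)))" for c y
  have "\<forall>c. \<exists>y. (v,c) \<in> E \<longrightarrow> good c y"
  proof
    fix c
    show "\<exists>y. (v,c) \<in> E \<longrightarrow> good c y"
    proof (cases "(v,c) \<in> E")
      case True
      then obtain z where z: "z \<in> D" "W (v,c) x z" "sat E D Ps W c z" using a unfolding join_def by blast
      then obtain y where "y c = z" "(\<forall>t\<in>desc E c - {c}. y t \<in> D)"
        "(\<forall>t\<in>desc E c. \<forall>R\<in>set (Ps t). R (y t))"
        "(\<forall>(p,q)\<in>E. p \<in> desc E c \<longrightarrow> W (p,q) (y p) (y q))" unfolding sat_def by blast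
      then have "good c y" using z unfolding good_def by simp
      then show ?thesis by blast
    qed simp
  qed
  from choice[OF this] obtain Y where Y0: "\<forall>c. (v,c) \<in> E \<longrightarrow> good c (Y c)" by blast
  have Y: "Y c c \<in> D \<and> W (v,c) x (Y c c) \<and> (\<forall>t\<in>desc E c - {c}. Y c t \<in> D)
      \<and> (\<forall>t\<in>desc E c. \<forall>R\<in>set (Ps t). R (Y c t))
      \<and> (\<forall>(p,q)\<in>E. p \<in> desc E c \<longrightarrow> W (p,q) (Y c p) (Y c q))" if "(v,c) \<in> E" for c
    using Y0 that unfolding good_def by blast
  define ch where "ch t = (SOME c. (v,c) \<in> E \<and> t \<in> desc E c)" for t
  have ch: "ch t = c" if "(v,c) \<in> E" "t \<in> desc E c" for c t
    unfolding ch_def by (rule some_equality) (use that child_unique in blast)+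
  define yy where "yy t = (if t = v then x else Y (ch t) t)" for t
  have nv: "t \<noteq> v" if "(v,c) \<in> E" "t \<in> desc E c" for c t
    using that not_back unfolding desc_def by blast
  have yt: "yy t = Y c t" if "(v,c) \<in> E" "t \<in> desc E c" for c t
    using that ch nv by (auto simp: yy_def)
  have p1: "yy t \<in> D" if t: "t \<in> desc E v - {v}" for t
  proof -
    obtain c where c: "(v,c) \<in> E" "t \<in> desc E c" using child_ex t by blast
    then show ?thesis using yt[OF c] Y[OF c(1)] by (cases "t = c") auto
  qed
  have p2: "R (yy t)" if t: "t \<in> desc E v" "R \<in> set (Ps t)" for t R
  proof (cases "t = v")
    case True
    then have "yy t = x" by (simp add: yy_def)
    then show ?thesis using a t True by auto
  next
    case False
    obtain c where c: "(v,c) \<in> E" "t \<in> desc E c" using child_ex t False by blast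
    then show ?thesis using yt[OF c] Y[OF c(1)] t by auto
  qed
  have p3: "W (p,q) (yy p) (yy q)" if pq: "(p,q) \<in> E" "p \<in> desc E v" for p q
  proof (cases "p = v")
    case True
    have qd: "q \<in> desc E q" by (simp add: desc_def)
    have "yy q = Y q q" using yt[of q q] pq True qd by simp
    moreover have "yy p = x" using True by (simp add: yy_def)
    ultimately show ?thesis using Y[of q] pq True by simp
  next
    case False
    obtain c where c: "(v,c) \<in> E" "p \<in> desc E c" using child_ex pq False by blast
    have qc: "q \<in> desc E c" using c(2) pq(1) unfolding desc_def by (simp add: rtrancl_into_rtrancl)
    show ?thesis using yt[OF c] yt[OF c(1) qc] Y[OF c(1)] c pq by auto
  qed
  have p0: "yy v = x" by (simp add: yy_def)
  have p3': "\<forall>(p,q)\<in>E. p \<in> desc E v \<longrightarrow> W (p,q) (yy p) (yy q)" using p3 by blast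
  show "sat E D Ps W v x" unfolding sat_def
    apply (rule exI[of _ yy])
    using p0 p1 p2 p3' by blast
qed

lemma desc0: "desc E 0 = N"
  unfolding desc_def using reach reach_N root by blast

lemma sat_root:
  assumes NT: "N \<subseteq> {0..T}" and D: "D \<noteq> {}"
  shows "sat E D Ps W 0 x \<longleftrightarrow> (\<exists>y. y 0 = x \<and> (\<forall>t\<in>{1..T}. y t \<in> D)
     \<and> (\<forall>t\<in>N. \<forall>R\<in>set (Ps t). R (y t)) \<and> (\<forall>(p,c)\<in>E. W (p,c) (y p) (y c)))"
proof
  assume "sat E D Ps W 0 x"
  then obtain y where y: "y 0 = x" "\<forall>t\<in>N - {0}. y t \<in> D"
    "\<forall>t\<in>N. \<forall>R\<in>set (Ps t). R (y t)"
    "\<forall>(p,c)\<in>E. p \<in> N \<longrightarrow> W (p,c) (y p) (y c)" unfolding sat_def desc0 by blast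
  obtain d where d: "d \<in> D" using D by blast
  define y' where "y' t = (if t \<in> N then y t else d)" for t
  show "\<exists>y. y 0 = x \<and> (\<forall>t\<in>{1..T}. y t \<in> D)
     \<and> (\<forall>t\<in>N. \<forall>R\<in>set (Ps t). R (y t)) \<and> (\<forall>(p,c)\<in>E. W (p,c) (y p) (y c))"
  proof (intro exI[of _ y'] conjI)
    show "y' 0 = x" using y root by (simp add: y'_def)
    show "\<forall>t\<in>{1..T}. y' t \<in> D" using y(2) d by (auto simp: y'_def)
    show "\<forall>t\<in>N. \<forall>R\<in>set (Ps t). R (y' t)" using y(3) by (auto simp: y'_def)
    show "\<forall>(p,c)\<in>E. W (p,c) (y' p) (y' c)" using y(4) EN by (auto simp: y'_def)
  qed
next
  assume "\<exists>y. y 0 = x \<and> (\<forall>t\<in>{1..T}. y t \<in> D)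
     \<and> (\<forall>t\<in>N. \<forall>R\<in>set (Ps t). R (y t)) \<and> (\<forall>(p,c)\<in>E. W (p,c) (y p) (y c))"
  then obtain y where y: "y 0 = x" "\<forall>t\<in>{1..T}. y t \<in> D"
     "\<forall>t\<in>N. \<forall>R\<in>set (Ps t). R (y t)" "\<forall>(p,c)\<in>E. W (p,c) (y p) (y c)" by blast
  have y0: "\<forall>t\<in>N - {0}. y t \<in> D"
  proof
    fix t assume t: "t \<in> N - {0}"
    then have "t \<in> {1..T}" using NT by fastforce
    then show "y t \<in> D" using y(2) by blast
  qed
  show "sat E D Ps W 0 x" unfolding sat_def desc0
    apply (rule exI[of _ y])
    using y y0 by blast
qed

end

lemma cc_conj: "set rs \<subseteq> conj_closure S \<Longrightarrow> (\<lambda>x. \<forall>R\<in>set rs. R x) \<in> conj_closure S"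
proof (induction rs)
  case Nil
  show ?case unfolding conj_closure_def by (rule CollectI, rule exI[of _ "[]"]) simp
next
  case (Cons R rs)
  then obtain r1 where r1: "R = (\<lambda>x. \<forall>R\<in>set r1. R x)" "set r1 \<subseteq> S"
    unfolding conj_closure_def by auto
  from Cons obtain r2 where r2: "(\<lambda>x. \<forall>R\<in>set rs. R x) = (\<lambda>x. \<forall>R\<in>set r2. R x)" "set r2 \<subseteq> S"
    unfolding conj_closure_def by auto
  have "(\<lambda>x. \<forall>R\<in>set (R # rs). R x) = (\<lambda>x. \<forall>R\<in>set (r1 @ r2). R x)"
  proof (rule ext)
    fix x
    have "(\<forall>R'\<in>set rs. R' x) = (\<forall>R'\<in>set r2. R' x)" using fun_cong[OF r2(1), of x] by simp
    then show "(\<forall>R\<in>set (R # rs). R x) = (\<forall>R\<in>set (r1 @ r2). R x)" by (simp add: r1(1) ball_Un)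
  qed
  moreover have "set (r1 @ r2) \<subseteq> S" using r1(2) r2(2) by simp
  ultimately show ?case unfolding conj_closure_def by blast
qed

lemma lp_cc: "\<exists>S. layer_preds D I1 heads l = conj_closure S"
  by (cases l) (simp only: layer_preds.simps, rule exI, rule refl)+

lemma lp_conj: "set rs \<subseteq> layer_preds D I1 heads l \<Longrightarrow> (\<lambda>x. \<forall>R\<in>set rs. R x) \<in> layer_preds D I1 heads l"
proof -
  assume a: "set rs \<subseteq> layer_preds D I1 heads l"
  obtain S where S: "layer_preds D I1 heads l = conj_closure S" using lp_cc by blast
  show ?thesis using cc_conj[of rs S] a unfolding S .
qed

lemma cc_sub: "R \<in> S \<Longrightarrow> R \<in> conj_closure S"
  unfolding conj_closure_def by (rule CollectI, rule exI[of _ "[R]"]) simp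

lemma lp_mono: "l \<le> k \<Longrightarrow> layer_preds D I1 heads l \<subseteq> layer_preds D I1 heads k"
proof (rule lift_Suc_mono_le[where f="layer_preds D I1 heads"])
  fix n show "layer_preds D I1 heads n \<le> layer_preds D I1 heads (Suc n)"
    by (simp only: layer_preds.simps(2)) (rule subsetI, rule cc_sub, rule UnI1)
qed

lemma join_in: "(Wx,R) \<in> set (heads (Suc l)) \<Longrightarrow> join D Wx R \<in> layer_preds D I1 heads (Suc l)"
  by (simp only: layer_preds.simps) (rule cc_sub, force)

lemma I1_in: "I1 \<subseteq> layer_preds D I1 heads l"
proof
  fix R assume "R \<in> I1"
  then have "R \<in> layer_preds D I1 heads 0" by (simp only: layer_preds.simps(1)) (rule cc_sub)
  then show "R \<in> layer_preds D I1 heads l" using lp_mono[of 0 l D I1 heads] by blast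
qed



theorem theorem2:
  fixes D :: "'a set" and I1 :: "('a \<Rightarrow> bool) set" and I2 :: "('a \<Rightarrow> 'a \<Rightarrow> bool) set"
    and Lb Hb :: nat and P :: "'a \<Rightarrow> bool"
  assumes "D \<noteq> {}" and "Hb \<ge> 1"
    and "FOET_LH D I1 I2 Lb Hb P"
  shows "join_chain_computes D I1 I2 Lb Hb P"
  using assms(3) unfolding FOET_LH_def
proof (elim exE)
  fix T M :: nat and Nn :: "nat \<Rightarrow> nat set" and E :: "nat \<Rightarrow> (nat \<times> nat) set"
    and Ps :: "nat \<Rightarrow> nat \<Rightarrow> ('a \<Rightarrow> bool) list" and W :: "nat \<Rightarrow> nat \<times> nat \<Rightarrow> 'a \<Rightarrow> 'a \<Rightarrow> bool"
    and Q :: "nat \<Rightarrow> bool"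
  assume HH: "(\<forall>m < M. rooted_tree (Nn m) (E m) \<and> Nn m \<subseteq> {0..T}
               \<and> (\<forall>e \<in> E m. W m e \<in> I2)
               \<and> (\<forall>t \<in> Nn m. set (Ps m t) \<subseteq> I1)
               \<and> tree_height (E m) \<le> Lb) \<and> ((\<Sum>m<M. card (tree_leaves (Nn m) (E m))) \<le> Hb) \<and> (\<forall>x \<in> D. P x \<longleftrightarrow>
           (\<exists>y :: nat \<Rightarrow> 'a. y 0 = x \<and> (\<forall>t \<in> {1..T}. y t \<in> D) \<and>
              (\<exists>m < M. (\<forall>t \<in> Nn m. \<forall>R \<in> set (Ps m t). R (y t))
                      \<and> (\<forall>(p, c) \<in> E m. W m (p, c) (y p) (y c))
                      \<and> Q m)))"
  note H = HH[THEN conjunct1] and Hs = HH[THEN conjunct2, THEN conjunct1]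
    and HP = HH[THEN conjunct2, THEN conjunct2]
  have Hrt: "rooted_tree (Nn m) (E m)" and HNT: "Nn m \<subseteq> {0..T}"
    and HW: "\<forall>e \<in> E m. W m e \<in> I2" and HPs: "\<forall>t \<in> Nn m. set (Ps m t) \<subseteq> I1"
    and Hht: "tree_height (E m) \<le> Lb" if "m < M" for m
    using H that by auto
  have rt: "rtree (Nn m) (E m)" if "m < M" for m
    using Hrt[OF that] by (simp add: rtree_def)
  have finE: "finite (E m)" if "m < M" for m
    using rtree.EN[OF rt[OF that]] rtree.finN[OF rt[OF that]]
    by (meson finite_SigmaI finite_subset)
  define S where "S m c = sat (E m) D (Ps m) (W m) c" for m c
  define A where "A l = {(m::nat,p::nat,c::nat). m < M \<and> (p,c) \<in> E m \<and> Suc (hgt (E m) c) = l}" for l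
  define heads where "heads l = map (\<lambda>(m,p,c). (W m (p,c), S m c)) (sorted_list_of_set (A l))" for l
  define outs where "outs = map (\<lambda>m. (S m 0, Q m)) [0..<M]"
  have finA: "finite (A l)" for l
  proof -
    have "A l \<subseteq> Sigma {..<M} E" unfolding A_def by auto
    moreover have "finite (Sigma {..<M} E)" using finE by (intro finite_SigmaI) auto
    ultimately show ?thesis using finite_subset by blast
  qed
  have setH: "set (heads l) = (\<lambda>(m,p,c). (W m (p,c), S m c)) ` A l" for l
    unfolding heads_def using finA by simp
  have Smem: "S m c \<in> layer_preds D I1 heads (hgt (E m) c)" if m: "m < M" and c: "c \<in> Nn m" for m c
  proof -
    interpret rtree "Nn m" "E m" using rt[OF m] .
    have fc: "finite {q. (c,q) \<in> E m}"
      using finE[OF m] by (rule finite_subset[rotated, OF finite_imageI[of _ snd]]) force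
    define cs where "cs = sorted_list_of_set {q. (c,q) \<in> E m}"
    have scs: "set cs = {q. (c,q) \<in> E m}" unfolding cs_def using fc by simp
    define rs where "rs = Ps m c @ map (\<lambda>q. join D (W m (c,q)) (S m q)) cs"
    have eq: "S m c = (\<lambda>x. \<forall>R\<in>set rs. R x)"
    proof (rule ext)
      fix x
      show "S m c x = (\<forall>R\<in>set rs. R x)"
        unfolding rs_def S_def using sat_unfold[OF c, where D=D and Ps="Ps m" and W="W m" and x=x] scs
        by (auto simp: ball_Un)
    qed
    have "set rs \<subseteq> layer_preds D I1 heads (hgt (E m) c)"
    proof
      fix R assume "R \<in> set rs"
      then consider "R \<in> set (Ps m c)" | q where "(c,q) \<in> E m" "R = join D (W m (c,q)) (S m q)"
        unfolding rs_def using scs by auto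
      then show "R \<in> layer_preds D I1 heads (hgt (E m) c)"
      proof cases
        case 1 then show ?thesis using HPs[OF m] c I1_in by blast
      next
        case 2
        have "(m,c,q) \<in> A (Suc (hgt (E m) q))" unfolding A_def using m 2 by simp
        then have hq: "(W m (c,q), S m q) \<in> set (heads (Suc (hgt (E m) q)))" unfolding setH by force
        have "R \<in> layer_preds D I1 heads (Suc (hgt (E m) q))" using join_in[of "W m (c,q)" "S m q" heads "hgt (E m) q" D I1, OF hq] 2(2) by simp
        then show ?thesis using lp_mono[OF h_edge[OF 2(1)]] by blast
      qed
    qed
    then show ?thesis unfolding eq by (rule lp_conj)
  qed
  have G1: "\<forall>l \<in> {1..Lb}. length (heads l) \<le> Hb \<and>
          (\<forall>(W, R) \<in> set (heads l). W \<in> I2 \<and> R \<in> layer_preds D I1 heads (l - 1))"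
  proof
    fix l assume l: "l \<in> {1..Lb}"
    have "card (A l) \<le> (\<Sum>m<M. card {(p,c). (p,c) \<in> E m \<and> Suc (hgt (E m) c) = l})"
    proof -
      have "A l = (\<Union>m\<in>{..<M}. Pair m ` {(p,c). (p,c) \<in> E m \<and> Suc (hgt (E m) c) = l})"
        unfolding A_def by auto
      then have "card (A l) \<le> (\<Sum>m<M. card (Pair m ` {(p,c). (p,c) \<in> E m \<and> Suc (hgt (E m) c) = l}))"
        using card_UN_le[of "{..<M}"] by simp
      also have "\<dots> = (\<Sum>m<M. card {(p,c). (p,c) \<in> E m \<and> Suc (hgt (E m) c) = l})"
        by (intro sum.cong refl card_image) (simp add: inj_on_def)
      finally show ?thesis .
    qed
    also have "\<dots> \<le> (\<Sum>m<M. card (tree_leaves (Nn m) (E m)))"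
      by (intro sum_mono rtree.card_layer rt) simp
    finally have "length (heads l) \<le> Hb" using Hs unfolding heads_def using finA by simp
    moreover have "\<forall>(Wx, R) \<in> set (heads l). Wx \<in> I2 \<and> R \<in> layer_preds D I1 heads (l - 1)"
    proof (clarify)
      fix Wx R assume "(Wx,R) \<in> set (heads l)"
      then obtain m p c where mpc: "(m,p,c) \<in> A l" "Wx = W m (p,c)" "R = S m c"
        unfolding setH by auto
      then have m: "m < M" and e: "(p,c) \<in> E m" and hl: "Suc (hgt (E m) c) = l" unfolding A_def by auto
      have "c \<in> Nn m" using rtree.EN[OF rt[OF m]] e by auto
      then have "R \<in> layer_preds D I1 heads (l - 1)" using Smem[OF m] mpc hl by auto
      then show "Wx \<in> I2 \<and> R \<in> layer_preds D I1 heads (l - 1)" using HW[OF m] e mpc by auto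
    qed
    ultimately show "length (heads l) \<le> Hb \<and>
          (\<forall>(W, R) \<in> set (heads l). W \<in> I2 \<and> R \<in> layer_preds D I1 heads (l - 1))" by blast
  qed
  have G2: "\<forall>(R, q) \<in> set outs. R \<in> layer_preds D I1 heads Lb"
    proof (clarify)
      fix R q assume "(R,q) \<in> set outs"
      then obtain m where m: "m < M" and R: "R = S m 0" unfolding outs_def by auto
      have "R \<in> layer_preds D I1 heads (hgt (E m) 0)"
        using Smem[OF m rtree.root[OF rt[OF m]]] R by simp
      moreover have "hgt (E m) 0 \<le> Lb" using Hht[OF m] unfolding tree_height_def hgt_def by simp
      ultimately show "R \<in> layer_preds D I1 heads Lb" using lp_mono by blast
    qed
  have G3: "\<forall>x\<in>D. P x \<longleftrightarrow> (\<exists>(R, q) \<in> set outs. R x \<and> q)"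
  proof
    fix x assume x: "x \<in> D"
    have "(\<exists>(R, q) \<in> set outs. R x \<and> q) \<longleftrightarrow> (\<exists>m<M. S m 0 x \<and> Q m)"
      unfolding outs_def by auto
    also have "\<dots> \<longleftrightarrow> (\<exists>m<M. (\<exists>y. y 0 = x \<and> (\<forall>t\<in>{1..T}. y t \<in> D)
     \<and> (\<forall>t\<in>Nn m. \<forall>R\<in>set (Ps m t). R (y t)) \<and> (\<forall>(p,c)\<in>E m. W m (p,c) (y p) (y c))) \<and> Q m)"
    proof -
      have "S m 0 x \<longleftrightarrow> (\<exists>y. y 0 = x \<and> (\<forall>t\<in>{1..T}. y t \<in> D)
     \<and> (\<forall>t\<in>Nn m. \<forall>R\<in>set (Ps m t). R (y t)) \<and> (\<forall>(p,c)\<in>E m. W m (p,c) (y p) (y c)))"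
        if m: "m < M" for m
        unfolding S_def by (rule rtree.sat_root[OF rt[OF m] HNT[OF m] assms(1)])
      then show ?thesis by blast
    qed
    also have "\<dots> \<longleftrightarrow> P x" using HP x by blast
    finally show "P x \<longleftrightarrow> (\<exists>(R, q) \<in> set outs. R x \<and> q)" by simp
  qed
  show ?thesis unfolding join_chain_computes_def
    apply (rule exI[of _ heads], rule exI[of _ outs])
    using G1 G2 G3 by blast
qed

end
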